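(* Let $A(x)=\sin^2(2\pi x)$, $\hat m(A)=\frac{A(1/3)+A(2/3)}{2}$, $\eta(x)=\frac{x}{4}+\frac12$, $F(x)=A(\frac{x}{2})+A(\frac{x}{4}+\frac12)$, and for $x\in[0,1]$ and $n\in\mathbb{N}$ let $V_2^{n*}(x)=\sum_{i=0}^{n-1}[F(\eta^i(x))-2\hat m(A)]$. Then $V_2^{n*}$ converges uniformly on $[0,1]$ as $n\to\infty$.
   Context: $\eta^i$ denotes the $i$-th iterate of $\eta$, with $\eta^0$ the identity. *)

theory Defs
  imports "HOL-Analysis.Analysis"
begin

definition A :: "real \<Rightarrow> real" where
  "A x = (sin (2 * pi * x))^2"

definition mhat :: real where
  "mhat = (A (1/3) + A (2/3)) / 2"

definition eta :: "real \<Rightarrow> real" where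
  "eta x = x / 4 + 1 / 2"

definition F :: "real \<Rightarrow> real" where
  "F x = A (x / 2) + A (x / 4 + 1 / 2)"

definition V2star :: "nat \<Rightarrow> real \<Rightarrow> real" where
  "V2star n x = (\<Sum>i<n. F ((eta ^^ i) x) - 2 * mhat)"

end

theory Submission
  imports Defs
begin

lemma sin_lip: "\<bar>sin (a::real) - sin b\<bar> \<le> \<bar>a - b\<bar>"
proof -
  have "\<bar>sin a - sin b\<bar> = 2 * \<bar>sin ((a - b) / 2)\<bar> * \<bar>cos ((a + b) / 2)\<bar>"
    by (simp add: sin_diff_sin abs_mult)
  also have "\<dots> \<le> 2 * \<bar>(a - b) / 2\<bar> * 1"
    by (intro mult_mono abs_sin_x_le_abs_x) auto
  finally show ?thesis by simp
qed

lemma A_lip: "\<bar>A x - A y\<bar> \<le> 4 * pi * \<bar>x - y\<bar>"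
proof -
  let ?a = "sin (2*pi*x)" and ?b = "sin (2*pi*y)"
  have "A x - A y = (?a - ?b) * (?a + ?b)" unfolding A_def by (simp add: power2_eq_square algebra_simps)
  hence "\<bar>A x - A y\<bar> = \<bar>?a - ?b\<bar> * \<bar>?a + ?b\<bar>" by (simp add: abs_mult)
  also have "\<dots> \<le> \<bar>2*pi*x - 2*pi*y\<bar> * 2"
  proof (intro mult_mono sin_lip)
    show "\<bar>?a + ?b\<bar> \<le> 2" using abs_sin_le_one[of "2*pi*x"] abs_sin_le_one[of "2*pi*y"] by linarith
  qed auto
  also have "\<bar>2*pi*x - 2*pi*y\<bar> = 2*pi*\<bar>x - y\<bar>"
    by (metis abs_mult abs_of_pos pi_gt_zero right_diff_distrib zero_less_mult_iff zero_less_numeral)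
  finally show ?thesis by simp
qed

lemma F_bound: "\<bar>F y - 2 * mhat\<bar> \<le> 3 * pi * \<bar>y - 2/3\<bar>"
proof -
  have "F y - 2 * mhat = (A (y/2) - A (1/3)) + (A (y/4 + 1/2) - A (2/3))"
    unfolding F_def mhat_def by (simp add: field_simps)
  hence "\<bar>F y - 2 * mhat\<bar> \<le> \<bar>A (y/2) - A (1/3)\<bar> + \<bar>A (y/4 + 1/2) - A (2/3)\<bar>" by simp
  also have "\<dots> \<le> 4*pi*\<bar>y/2 - 1/3\<bar> + 4*pi*\<bar>y/4 + 1/2 - 2/3\<bar>"
    by (intro add_mono A_lip)
  also have "\<bar>y/2 - 1/3\<bar> = \<bar>y - 2/3\<bar> / 2" by (simp add: abs_if field_simps)
  also have "\<bar>y/4 + 1/2 - 2/3\<bar> = \<bar>y - 2/3\<bar> / 4" by (simp add: abs_if field_simps)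
  finally show ?thesis by (simp add: algebra_simps)
qed

lemma eta_iter: "(eta ^^ i) x - 2/3 = (x - 2/3) / 4 ^ i"
  by (induction i) (auto simp: eta_def field_simps)

theorem mainTheorem6:
  shows "uniformly_convergent_on {0..1} V2star"
proof -
  have "uniformly_convergent_on {0..1} (\<lambda>n x. \<Sum>i<n. F ((eta ^^ i) x) - 2 * mhat)"
  proof (rule Weierstrass_m_test'[where M = "\<lambda>i. 3 * pi * (1/4) ^ i"])
    fix n and x :: real
    assume x: "x \<in> {0..1}"
    have "norm (F ((eta ^^ n) x) - 2 * mhat) \<le> 3 * pi * \<bar>(eta ^^ n) x - 2/3\<bar>"
      using F_bound by simp
    also have "\<bar>(eta ^^ n) x - 2/3\<bar> = \<bar>x - 2/3\<bar> / 4 ^ n" by (simp add: eta_iter)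
    also have "\<dots> \<le> 1 / 4 ^ n" using x by (intro divide_right_mono) auto
    finally show "norm (F ((eta ^^ n) x) - 2 * mhat) \<le> 3 * pi * (1/4) ^ n"
      by (simp add: power_one_over)
  next
    show "summable (\<lambda>i. 3 * pi * (1/4::real) ^ i)"
      by (intro summable_mult summable_geometric) auto
  qed
  thus ?thesis unfolding V2star_def[abs_def] by simp
qed

end
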